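(* Let $n\geq 5$. Every optimal anticode of diameter $2$ in $S_n$ with respect to the Kendall's $\tau$-distance is a sphere of radius $1$, i.e., a set of the form $\{\pi\in S_n : d_K(\sigma,\pi)\leq 1\}$ for some $\sigma\in S_n$; its size is $n$.
   Context: $S_n$ denotes the set of all permutations of $[n]=\{1,\dots,n\}$, written $\sigma=[\sigma(1),\dots,\sigma(n)]$. An adjacent transposition applied to $\sigma$ exchanges the entries in positions $i$ and $i+1$ for some $1\leq i\leq n-1$. The Kendall's $\tau$-distance $d_K(\sigma,\pi)$ is the minimum number of adjacent transpositions needed to transform $\sigma$ into $\pi$. An anticode of diameter $D$ is a subset $\mathcal{A}\subseteq S_n$ with $d_K(x,y)\leq D$ for all $x,y\in\mathcal{A}$; it is optimal if it has the largest possible size among all anticodes of diameter $D$ in $S_n$. *)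

theory Defs
  imports "HOL-Combinatorics.Permutations"
begin

text \<open>S_n: permutations of {1..n}, as functions nat => nat fixing everything outside {1..n};
  sigma i is the entry in position i.\<close>
definition perms :: "nat \<Rightarrow> (nat \<Rightarrow> nat) set" where
  "perms n = {\<sigma>. \<sigma> permutes {1..n}}"

definition adj_rel :: "nat \<Rightarrow> ((nat \<Rightarrow> nat) \<times> (nat \<Rightarrow> nat)) set" where
  "adj_rel n = {(\<sigma>, \<pi>). \<exists>i. 1 \<le> i \<and> i \<le> n - 1 \<and>
                  \<pi> = \<sigma>(i := \<sigma> (Suc i), Suc i := \<sigma> i)}"

definition dK :: "nat \<Rightarrow> (nat \<Rightarrow> nat) \<Rightarrow> (nat \<Rightarrow> nat) \<Rightarrow> nat" where
  "dK n \<sigma> \<pi> = (LEAST k. (\<sigma>, \<pi>) \<in> adj_rel n ^^ k)"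

definition anticode :: "nat \<Rightarrow> nat \<Rightarrow> (nat \<Rightarrow> nat) set \<Rightarrow> bool" where
  "anticode n D A \<longleftrightarrow> A \<subseteq> perms n \<and> (\<forall>x\<in>A. \<forall>y\<in>A. dK n x y \<le> D)"

definition optimal_anticode :: "nat \<Rightarrow> nat \<Rightarrow> (nat \<Rightarrow> nat) set \<Rightarrow> bool" where
  "optimal_anticode n D A \<longleftrightarrow> anticode n D A \<and> (\<forall>B. anticode n D B \<longrightarrow> card B \<le> card A)"

definition sphere_K :: "nat \<Rightarrow> (nat \<Rightarrow> nat) \<Rightarrow> nat \<Rightarrow> (nat \<Rightarrow> nat) set" where
  "sphere_K n \<sigma> r = {\<pi> \<in> perms n. dK n \<sigma> \<pi> \<le> r}"

end

theory Submission
  imports Defs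
begin



definition sw :: "nat \<Rightarrow> nat \<Rightarrow> nat" where "sw i = Transposition.transpose i (Suc i)"

lemma sw_apply: "sw i t = (if t = i then Suc i else if t = Suc i then i else t)"
  by (simp add: sw_def Transposition.transpose_def)

lemma sw_sw [simp]: "sw i (sw i t) = t"
  by (simp add: sw_apply)

lemma sw_comp_sw [simp]: "f \<circ> sw i \<circ> sw i = f"
  by (simp add: fun_eq_iff)

lemma bij_sw [simp]: "bij (sw i)"
  by (simp add: sw_def)

lemma upd_eq_comp: "\<sigma>(i := \<sigma> (Suc i), Suc i := \<sigma> i) = \<sigma> \<circ> sw i"
  by (auto simp: fun_eq_iff sw_apply)

lemma adj_rel_iff: "(\<sigma>,\<pi>) \<in> adj_rel n \<longleftrightarrow> (\<exists>i. 1 \<le> i \<and> i \<le> n-1 \<and> \<pi> = \<sigma> \<circ> sw i)"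
  by (simp add: adj_rel_def upd_eq_comp)

lemma adj_sym: "(\<sigma>,\<pi>) \<in> adj_rel n \<Longrightarrow> (\<pi>,\<sigma>) \<in> adj_rel n"
  unfolding adj_rel_iff by (metis sw_comp_sw)

lemma sw_permutes: "1 \<le> i \<Longrightarrow> i \<le> n - 1 \<Longrightarrow> sw i permutes {1..n}"
  unfolding sw_def by (rule permutes_swap_id) auto

lemma perms_comp_sw: "\<sigma> \<in> perms n \<Longrightarrow> 1 \<le> i \<Longrightarrow> i \<le> n - 1 \<Longrightarrow> \<sigma> \<circ> sw i \<in> perms n"
  unfolding perms_def using sw_permutes permutes_compose by blast

lemma adj_perms: "(\<sigma>,\<pi>) \<in> adj_rel n \<Longrightarrow> \<sigma> \<in> perms n \<Longrightarrow> \<pi> \<in> perms n"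
  unfolding adj_rel_iff using perms_comp_sw by blast

lemma adj_left: "(x,y) \<in> adj_rel n ^^ k \<Longrightarrow> (\<tau> \<circ> x, \<tau> \<circ> y) \<in> adj_rel n ^^ k"
proof (induction k arbitrary: y)
  case 0
  then show ?case by simp
next
  case (Suc k)
  then obtain z where z: "(x,z) \<in> adj_rel n ^^ k" "(z,y) \<in> adj_rel n" by auto
  from z(2) obtain i where "1 \<le> i" "i \<le> n-1" "y = z \<circ> sw i" unfolding adj_rel_iff by blast
  then have "(\<tau> \<circ> z, \<tau> \<circ> y) \<in> adj_rel n" unfolding adj_rel_iff by (auto simp: o_assoc)
  with Suc.IH[OF z(1)] show ?case by (auto simp: comp_def)
qed

lemma adj_mono: "adj_rel n \<subseteq> adj_rel (Suc n)"
  unfolding adj_rel_def by auto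

lemma relpow_mono_set: fixes R S :: "('a \<times> 'a) set" assumes "R \<subseteq> S" shows "R ^^ k \<subseteq> S ^^ k"
proof (induction k)
  case 0 show ?case by (simp add: relpow.simps(1))
next
  case (Suc k) then show ?case using relcomp_mono[OF Suc.IH assms] by simp
qed

lemma move_last:
  "\<rho> permutes {1..N} \<Longrightarrow> 1 \<le> j \<Longrightarrow> j \<le> N \<Longrightarrow> \<rho> j = N \<Longrightarrow>
   \<exists>k \<rho>'. (\<rho>,\<rho>') \<in> adj_rel N ^^ k \<and> \<rho>' permutes {1..N} \<and> \<rho>' N = N"
proof (induction "N - j" arbitrary: \<rho> j)
  case 0
  then have "j = N" by simp
  then show ?case using 0 by (intro exI[of _ 0] exI[of _ \<rho>]) auto
next
  case (Suc d)
  then have jN: "j < N" by simp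
  define \<rho>1 where "\<rho>1 = \<rho> \<circ> sw j"
  have "sw j permutes {1..N}" using sw_permutes[of j N] Suc.prems jN by simp
  then have p1: "\<rho>1 permutes {1..N}" unfolding \<rho>1_def
    using Suc.prems permutes_compose by blast
  have r1: "(\<rho>,\<rho>1) \<in> adj_rel N" unfolding adj_rel_iff \<rho>1_def using Suc.prems jN by auto
  have r: "\<rho>1 (Suc j) = N" unfolding \<rho>1_def using Suc.prems by (simp add: sw_apply)
  have dd: "d = N - Suc j" using Suc.hyps(2) by simp
  have "1 \<le> Suc j" "Suc j \<le> N" using jN by auto
  from Suc.hyps(1)[OF dd p1 this r] obtain k \<rho>' where
    "(\<rho>1,\<rho>') \<in> adj_rel N ^^ k" "\<rho>' permutes {1..N}" "\<rho>' N = N" by blast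
  with r1 show ?case by (meson relpow_Suc_I2)
qed

lemma reach_id: "\<rho> permutes {1..n} \<Longrightarrow> \<exists>k. (\<rho>, id) \<in> adj_rel n ^^ k"
proof (induction n arbitrary: \<rho>)
  case 0
  then have "\<rho> = id" by simp
  then show ?case by (intro exI[of _ 0]) simp
next
  case (Suc n)
  define j where "j = inv \<rho> (Suc n)"
  have rj: "\<rho> j = Suc n" unfolding j_def using Suc.prems by (simp add: permutes_inverses)
  have "j \<in> {1..Suc n}" using Suc.prems rj permutes_in_image[OF Suc.prems, of j] by auto
  then obtain k \<rho>' where A: "(\<rho>,\<rho>') \<in> adj_rel (Suc n) ^^ k" "\<rho>' permutes {1..Suc n}" "\<rho>' (Suc n) = Suc n"
    using move_last[OF Suc.prems _ _ rj] by auto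
  have "\<rho>' permutes {1..n}" using A(2,3) unfolding permutes_def
    by (metis atLeastAtMost_iff le_Suc_eq)
  then obtain k2 where "(\<rho>', id) \<in> adj_rel n ^^ k2" using Suc.IH by blast
  then have "(\<rho>', id) \<in> adj_rel (Suc n) ^^ k2" using relpow_mono_set[OF adj_mono] by blast
  with A(1) show ?case using relpow_trans by metis
qed

lemma reach: "\<sigma> \<in> perms n \<Longrightarrow> \<pi> \<in> perms n \<Longrightarrow> \<exists>k. (\<sigma>,\<pi>) \<in> adj_rel n ^^ k"
proof -
  assume s: "\<sigma> \<in> perms n" and p: "\<pi> \<in> perms n"
  have "inv \<pi> \<circ> \<sigma> permutes {1..n}" using s p unfolding perms_def
    by (simp add: permutes_compose permutes_inv)
  then obtain k where "(inv \<pi> \<circ> \<sigma>, id) \<in> adj_rel n ^^ k" using reach_id by blast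
  from adj_left[OF this, of \<pi>] have "(\<pi> \<circ> inv \<pi> \<circ> \<sigma>, \<pi>) \<in> adj_rel n ^^ k" by (simp add: o_assoc)
  moreover have "\<pi> \<circ> inv \<pi> = id" using p unfolding perms_def by (simp add: permutes_inv_o)
  ultimately show ?thesis by auto
qed

lemma dK_le: "(\<sigma>,\<pi>) \<in> adj_rel n ^^ k \<Longrightarrow> dK n \<sigma> \<pi> \<le> k"
  unfolding dK_def by (rule Least_le)

lemma dK_attained: "\<sigma> \<in> perms n \<Longrightarrow> \<pi> \<in> perms n \<Longrightarrow> (\<sigma>,\<pi>) \<in> adj_rel n ^^ dK n \<sigma> \<pi>"
  unfolding dK_def using reach by (meson LeastI_ex)




definition adjx :: "nat \<Rightarrow> (nat\<Rightarrow>nat) \<Rightarrow> (nat\<Rightarrow>nat) \<Rightarrow> bool" where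
  "adjx n x y \<longleftrightarrow> (\<exists>i. 1 \<le> i \<and> i \<le> n-1 \<and> y = x \<circ> sw i)"

definition two :: "nat \<Rightarrow> (nat\<Rightarrow>nat) \<Rightarrow> (nat\<Rightarrow>nat) \<Rightarrow> bool" where
  "two n x y \<longleftrightarrow> (\<exists>i j. 1 \<le> i \<and> i \<le> n-1 \<and> 1 \<le> j \<and> j \<le> n-1 \<and> i \<noteq> j \<and> y = x \<circ> sw i \<circ> sw j)"

lemma adjx_rel: "adjx n x y \<longleftrightarrow> (x,y) \<in> adj_rel n"
  by (simp add: adjx_def adj_rel_iff)

lemma adjx_sym: "adjx n x y \<Longrightarrow> adjx n y x"
  using adj_sym adjx_rel by blast

lemma relpow2: "(x,y) \<in> R ^^ 2 \<longleftrightarrow> (\<exists>z. (x,z) \<in> R \<and> (z,y) \<in> R)"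
proof -
  have "R ^^ 2 = R ^^ 1 O R" by (metis Suc_1 relpow.simps(2))
  then show ?thesis by auto
qed

lemma le2_cases:
  assumes "x \<in> perms n" "y \<in> perms n" "dK n x y \<le> 2"
  shows "y = x \<or> adjx n x y \<or> two n x y"
proof -
  have A: "(x,y) \<in> adj_rel n ^^ dK n x y" using dK_attained assms by blast
  consider "dK n x y = 0" | "dK n x y = 1" | "dK n x y = 2" using assms(3) by linarith
  then show ?thesis
  proof cases
    case 1 then show ?thesis using A by simp
  next
    case 2 then show ?thesis using A by (simp add: adjx_rel)
  next
    case 3
    then obtain z where "(x,z) \<in> adj_rel n" "(z,y) \<in> adj_rel n" using A relpow2 by metis
    then obtain i j where ij: "1 \<le> i" "i \<le> n-1" "1 \<le> j" "j \<le> n-1" "y = x \<circ> sw i \<circ> sw j"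
      unfolding adj_rel_iff by blast
    show ?thesis
    proof (cases "i = j")
      case True then show ?thesis using ij by simp
    next
      case False then show ?thesis using ij unfolding two_def by blast
    qed
  qed
qed

lemma le1_iff:
  assumes "x \<in> perms n" "y \<in> perms n"
  shows "dK n x y \<le> 1 \<longleftrightarrow> y = x \<or> adjx n x y"
proof
  assume "dK n x y \<le> 1"
  moreover have A: "(x,y) \<in> adj_rel n ^^ dK n x y" using dK_attained assms by blast
  ultimately consider "dK n x y = 0" | "dK n x y = 1" by linarith
  then show "y = x \<or> adjx n x y" using A by cases (auto simp: adjx_rel)
next
  assume "y = x \<or> adjx n x y"
  then show "dK n x y \<le> 1"
  proof
    assume "y = x" then have "(x,y) \<in> adj_rel n ^^ 0" by simp
    then have "dK n x y \<le> 0" by (rule dK_le)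
    then show ?thesis by simp
  next
    assume "adjx n x y" then have "(x,y) \<in> adj_rel n ^^ 1" by (simp add: adjx_rel)
    then show "dK n x y \<le> 1" by (rule dK_le)
  qed
qed

lemma dK_via:
  assumes "z = x \<or> adjx n z x" "z = y \<or> adjx n z y"
  shows "dK n x y \<le> 2"
proof -
  have "(x,z) \<in> adj_rel n ^^ 0 \<or> (x,z) \<in> adj_rel n ^^ 1" using assms(1) adjx_sym adjx_rel by auto
  moreover have "(z,y) \<in> adj_rel n ^^ 0 \<or> (z,y) \<in> adj_rel n ^^ 1" using assms(2) adjx_rel by auto
  ultimately obtain a b where "a \<le> 1" "b \<le> 1" "(x,z) \<in> adj_rel n ^^ a" "(z,y) \<in> adj_rel n ^^ b" by blast
  then have "(x,y) \<in> adj_rel n ^^ (a+b)" using relpow_trans by metis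
  then have "dK n x y \<le> a + b" by (rule dK_le)
  then show ?thesis using \<open>a \<le> 1\<close> \<open>b \<le> 1\<close> by linarith
qed

lemma sphere_eq:
  assumes "\<sigma> \<in> perms n"
  shows "sphere_K n \<sigma> 1 = insert \<sigma> ((\<lambda>i. \<sigma> \<circ> sw i) ` {1..n-1})"
proof
  show "sphere_K n \<sigma> 1 \<subseteq> insert \<sigma> ((\<lambda>i. \<sigma> \<circ> sw i) ` {1..n-1})"
    using le1_iff[OF assms] unfolding sphere_K_def adjx_def by auto
next
  show "insert \<sigma> ((\<lambda>i. \<sigma> \<circ> sw i) ` {1..n-1}) \<subseteq> sphere_K n \<sigma> 1"
  proof
    fix y assume y: "y \<in> insert \<sigma> ((\<lambda>i. \<sigma> \<circ> sw i) ` {1..n-1})"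
    then have "y = \<sigma> \<or> adjx n \<sigma> y" unfolding adjx_def by auto
    moreover have "y \<in> perms n" using y assms perms_comp_sw by auto
    ultimately show "y \<in> sphere_K n \<sigma> 1" using le1_iff[OF assms] unfolding sphere_K_def by auto
  qed
qed

lemma perm_inj: "\<sigma> \<in> perms n \<Longrightarrow> inj \<sigma>"
  unfolding perms_def using permutes_inj by blast

lemma perm_bij: "\<sigma> \<in> perms n \<Longrightarrow> bij \<sigma>"
  unfolding perms_def using permutes_bij by blast

lemma comp_cancel: "inj \<sigma> \<Longrightarrow> \<sigma> \<circ> f = \<sigma> \<circ> g \<Longrightarrow> f = g"
  by (auto simp: fun_eq_iff inj_def)

lemma card_sphere:
  assumes "\<sigma> \<in> perms n" "n \<ge> 1"
  shows "card (sphere_K n \<sigma> 1) = n"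
proof -
  have inj: "inj \<sigma>" using perm_inj assms by blast
  have "inj_on (\<lambda>i. \<sigma> \<circ> sw i) {1..n-1}"
  proof (rule inj_onI)
    fix i j assume "\<sigma> \<circ> sw i = \<sigma> \<circ> sw j"
    then have "sw i = sw j" using comp_cancel inj by blast
    then have "sw i i = sw j i" by simp
    then show "i = j" by (auto simp: sw_apply split: if_splits)
  qed
  moreover have "\<sigma> \<notin> (\<lambda>i. \<sigma> \<circ> sw i) ` {1..n-1}"
  proof
    assume "\<sigma> \<in> (\<lambda>i. \<sigma> \<circ> sw i) ` {1..n-1}"
    then obtain i where "\<sigma> \<circ> id = \<sigma> \<circ> sw i" by auto
    then have "id = sw i" using comp_cancel inj by blast
    then have "id i = sw i i" by simp
    then show False by (simp add: sw_apply)
  qed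
  ultimately have "card (insert \<sigma> ((\<lambda>i. \<sigma> \<circ> sw i) ` {1..n-1})) = Suc (n - 1)"
    by (simp add: card_image)
  then show ?thesis using assms(2) by (simp only: sphere_eq[OF assms(1)])
qed

lemma sphere_anticode:
  assumes "\<sigma> \<in> perms n"
  shows "anticode n 2 (sphere_K n \<sigma> 1)"
  unfolding anticode_def
proof
  show "sphere_K n \<sigma> 1 \<subseteq> perms n" unfolding sphere_K_def by auto
  show "\<forall>x\<in>sphere_K n \<sigma> 1. \<forall>y\<in>sphere_K n \<sigma> 1. dK n x y \<le> 2"
    using le1_iff[OF assms] dK_via unfolding sphere_K_def by blast
qed

lemma mv_lo: "i \<noteq> j \<Longrightarrow> sw i (sw j t) \<noteq> t \<Longrightarrow> min i j \<le> t"
  by (auto simp: sw_apply split: if_splits)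
lemma mv_hi: "i \<noteq> j \<Longrightarrow> sw i (sw j t) \<noteq> t \<Longrightarrow> t \<le> Suc (max i j)"
  by (auto simp: sw_apply split: if_splits)
lemma mv_min: "i \<noteq> j \<Longrightarrow> sw i (sw j (min i j)) \<noteq> min i j"
  by (auto simp: sw_apply min_def split: if_splits)
lemma mv_max: "i \<noteq> j \<Longrightarrow> sw i (sw j (Suc (max i j))) \<noteq> Suc (max i j)"
  by (auto simp: sw_apply max_def split: if_splits)

lemma T_commute_id: assumes "sw i \<circ> sw j = sw k \<circ> sw l" "i \<noteq> j" shows "k = i \<or> k = j"
proof -
  have e: "\<And>t. sw i (sw j t) = sw k (sw l t)" using assms(1) by (metis comp_apply)
  have kl: "k \<noteq> l" using e[of "min i j"] mv_min[OF assms(2)] sw_sw by metis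
  have "min i j \<le> min k l" using mv_lo[OF assms(2), of "min k l"] mv_min[OF kl] e by metis
  moreover have "min k l \<le> min i j" using mv_lo[OF kl, of "min i j"] mv_min[OF assms(2)] e by metis
  moreover have "max i j \<le> max k l" using mv_hi[OF kl, of "Suc (max i j)"] mv_max[OF assms(2)] e by fastforce
  moreover have "max k l \<le> max i j" using mv_hi[OF assms(2), of "Suc (max k l)"] mv_max[OF kl] e by fastforce
  ultimately show ?thesis by (auto simp: min_def max_def split: if_splits)
qed




definition Inv :: "(nat\<Rightarrow>nat) \<Rightarrow> (nat\<times>nat) set" where
  "Inv x = {(u,v). u < v \<and> inv x v < inv x u}"
definition PP :: "nat \<Rightarrow> nat \<Rightarrow> nat\<times>nat" where "PP u v = (min u v, max u v)"
definition symd :: "'a set \<Rightarrow> 'a set \<Rightarrow> 'a set" where "symd A B = (A - B) \<union> (B - A)"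
definition Dl :: "(nat\<Rightarrow>nat) \<Rightarrow> (nat\<Rightarrow>nat) \<Rightarrow> (nat\<times>nat) set" where
  "Dl x y = symd (Inv x) (Inv y)"

lemma PP_eq: "PP u v = PP u' v' \<longleftrightarrow> (u = u' \<and> v = v') \<or> (u = v' \<and> v = u')"
  by (auto simp: PP_def min_def max_def)

lemma inv_comp_sw: "bij x \<Longrightarrow> inv (x \<circ> sw i) = sw i \<circ> inv x"
  by (simp add: o_inv_distrib sw_def)

lemma Inv_sw:
  assumes "bij x"
  shows "Inv (x \<circ> sw i) = symd (Inv x) {PP (x i) (x (Suc i))}"
proof (rule set_eqI)
  fix p :: "nat \<times> nat"
  obtain u v where p: "p = (u,v)" by fastforce
  have inj: "inj x" using assms bij_is_inj by blast
  have xa: "x (inv x u) = u" "x (inv x v) = v" using assms by (simp_all add: bij_is_surj surj_f_inv_f)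
  have ne: "x i \<noteq> x (Suc i)" using inj by (simp add: inj_eq)
  have iv: "inv (x \<circ> sw i) = sw i \<circ> inv x" using inv_comp_sw assms by blast
  show "p \<in> Inv (x \<circ> sw i) \<longleftrightarrow> p \<in> symd (Inv x) {PP (x i) (x (Suc i))}"
  proof (cases "u < v")
    case False
    then have "(u,v) \<noteq> PP (x i) (x (Suc i))" using ne by (auto simp: PP_def min_def max_def)
    then show ?thesis using False by (simp add: p Inv_def symd_def)
  next
    case True
    define a where "a = inv x u"
    define b where "b = inv x v"
    have xab: "x a = u" "x b = v" using xa a_def b_def by auto
    have ab: "a \<noteq> b" using True xab by auto
    have "(u,v) = PP (x i) (x (Suc i)) \<longleftrightarrow> (u = x i \<and> v = x (Suc i)) \<or> (u = x (Suc i) \<and> v = x i)"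
      using True by (auto simp: PP_def min_def max_def)
    also have "\<dots> \<longleftrightarrow> (a = i \<and> b = Suc i) \<or> (a = Suc i \<and> b = i)"
      using xab inj by (auto simp: inj_eq)
    finally have E: "(u,v) = PP (x i) (x (Suc i)) \<longleftrightarrow> (a = i \<and> b = Suc i) \<or> (a = Suc i \<and> b = i)" .
    have L: "p \<in> Inv (x \<circ> sw i) \<longleftrightarrow> sw i b < sw i a"
      using True by (simp add: p Inv_def iv a_def b_def)
    have R: "p \<in> symd (Inv x) {PP (x i) (x (Suc i))} \<longleftrightarrow> (b < a) \<noteq> ((u,v) = PP (x i) (x (Suc i)))"
      using True by (auto simp: p Inv_def symd_def a_def b_def)
    show ?thesis unfolding L R E using ab by (auto simp: sw_apply)
  qed
qed

lemma Dl_adj: "bij x \<Longrightarrow> Dl x (x \<circ> sw i) = {PP (x i) (x (Suc i))}"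
  by (auto simp: Dl_def Inv_sw symd_def)

lemma Dl_two: "bij x \<Longrightarrow> Dl x (x \<circ> sw i \<circ> sw j) =
   symd {PP (x i) (x (Suc i))} {PP (x (sw i j)) (x (sw i (Suc j)))}"
proof -
  assume b: "bij x"
  have b2: "bij (x \<circ> sw i)" using b by (simp add: bij_comp)
  show ?thesis using Inv_sw[OF b2, of j] Inv_sw[OF b, of i]
    by (auto simp: Dl_def symd_def)
qed

lemma sw_ne_arith: "i \<noteq> j \<Longrightarrow> \<not> ((i = sw i j \<and> Suc i = sw i (Suc j)) \<or> (i = sw i (Suc j) \<and> Suc i = sw i j))"
  by (auto simp: sw_apply split: if_splits)

lemma PP_ne: "inj x \<Longrightarrow> i \<noteq> j \<Longrightarrow> PP (x i) (x (Suc i)) \<noteq> PP (x (sw i j)) (x (sw i (Suc j)))"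
  unfolding PP_eq using sw_ne_arith[of i j] by (simp add: inj_eq)

lemma classify:
  assumes "x \<in> perms n" "y \<in> perms n" "dK n x y \<le> 2"
  shows "(y = x \<and> Dl x y = {}) \<or> (adjx n x y \<and> finite (Dl x y) \<and> card (Dl x y) = 1)
      \<or> (two n x y \<and> finite (Dl x y) \<and> card (Dl x y) = 2)"
proof -
  have b: "bij x" using perm_bij assms by blast
  have i: "inj x" using perm_inj assms by blast
  consider "y = x" | "adjx n x y" | "two n x y" using le2_cases[OF assms] by blast
  then show ?thesis
  proof cases
    case 1 then show ?thesis by (simp add: Dl_def symd_def)
  next
    case 2
    then obtain k where "y = x \<circ> sw k" unfolding adjx_def by blast
    then show ?thesis using 2 Dl_adj[OF b] by simp
  next
    case 3
    then obtain k l where kl: "k \<noteq> l" "y = x \<circ> sw k \<circ> sw l" unfolding two_def by blast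
    have ne: "PP (x k) (x (Suc k)) \<noteq> PP (x (sw k l)) (x (sw k (Suc l)))" using PP_ne[OF i kl(1)] .
    have "Dl x y = {PP (x k) (x (Suc k)), PP (x (sw k l)) (x (sw k (Suc l)))}"
      using Dl_two[OF b, of k l] kl(2) ne by (auto simp: symd_def)
    then show ?thesis using 3 ne by simp
  qed
qed

lemma ac_props:
  assumes "anticode n 2 A" "x \<in> A" "y \<in> A"
  shows "finite (Dl x y)" "card (Dl x y) \<le> 2" "card (Dl x y) = 0 \<Longrightarrow> y = x"
    "card (Dl x y) = 1 \<Longrightarrow> adjx n x y" "card (Dl x y) = 2 \<Longrightarrow> two n x y"
proof -
  have "x \<in> perms n" "y \<in> perms n" "dK n x y \<le> 2" using assms unfolding anticode_def by auto
  note c = classify[OF this]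
  show "finite (Dl x y)" "card (Dl x y) \<le> 2" using c by auto
  show "card (Dl x y) = 0 \<Longrightarrow> y = x" "card (Dl x y) = 1 \<Longrightarrow> adjx n x y"
    "card (Dl x y) = 2 \<Longrightarrow> two n x y" using c by auto
qed

lemma Dl_trans: "Dl y z = symd (Dl x y) (Dl x z)"
  by (auto simp: Dl_def symd_def)

lemma card_symd:
  assumes "finite X" "finite Y"
  shows "card (symd X Y) + 2 * card (X \<inter> Y) = card X + card Y"
proof -
  have "card (symd X Y) = card (X - Y) + card (Y - X)"
    unfolding symd_def using assms by (simp add: card_Un_disjoint Diff_Int_distrib2 disjoint_iff)
  moreover have "card (X - Y) + card (X \<inter> Y) = card X"
    using card_Int_Diff[OF assms(1), of Y] by simp
  moreover have "card (Y - X) + card (X \<inter> Y) = card Y"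
    using card_Int_Diff[OF assms(2), of X] by (simp add: Int_commute)
  ultimately show ?thesis by linarith
qed




lemma T3: "i \<noteq> j \<Longrightarrow> (sw i j = k \<and> sw i (Suc j) = Suc k) \<or> (sw i j = Suc k \<and> sw i (Suc j) = k)
   \<Longrightarrow> j = k \<and> sw i \<circ> sw j = sw j \<circ> sw i"
  by (auto simp: sw_apply fun_eq_iff split: if_splits)

lemma T4: "i \<noteq> j \<Longrightarrow> (sw i j = j \<and> sw i (Suc j) = Suc j \<and> sw i \<circ> sw j = sw j \<circ> sw i) \<or> j = Suc i \<or> Suc j = i"
  by (auto simp: sw_apply fun_eq_iff)

lemma card1_pair: "a \<noteq> b \<Longrightarrow> card (Z \<inter> {a,b}) = 1 \<Longrightarrow> (a \<in> Z) \<noteq> (b \<in> Z)"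
  by (cases "a \<in> Z"; cases "b \<in> Z") (auto simp: Int_insert_right)

lemma star:
  assumes "finite F" "4 \<le> card F" "\<forall>X\<in>F. card X = 2" "\<forall>X\<in>F. \<forall>Y\<in>F. X \<noteq> Y \<longrightarrow> card (X \<inter> Y) = 1"
  shows "\<exists>p. \<forall>X\<in>F. p \<in> X"
proof (rule ccontr)
  assume H: "\<not> ?thesis"
  obtain X where X: "X \<in> F" using assms(2) by fastforce
  then obtain p q where pq: "X = {p,q}" "p \<noteq> q" using assms(3) by (meson card_2_iff)
  obtain Y1 where Y1: "Y1 \<in> F" "p \<notin> Y1" using H by blast
  obtain Y2 where Y2: "Y2 \<in> F" "q \<notin> Y2" using H by blast
  have "Y1 \<noteq> X" "Y2 \<noteq> X" using Y1 Y2 pq by auto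
  then have "card (Y1 \<inter> X) = 1" "card (Y2 \<inter> X) = 1" using assms(4) X Y1 Y2 by blast+
  then have c1: "card (Y1 \<inter> {p,q}) = 1" "card (Y2 \<inter> {p,q}) = 1" using pq by simp_all
  have qY1: "q \<in> Y1" using card1_pair[OF pq(2) c1(1)] Y1 by blast
  have pY2: "p \<in> Y2" using card1_pair[OF pq(2) c1(2)] Y2 by blast
  obtain r where r: "Y1 = {q,r}" "r \<noteq> q" using assms(3) Y1 qY1 by (metis card_2_iff insert_commute insertE singletonD)
  have rp: "r \<noteq> p" using r Y1 by auto
  have "Y1 \<noteq> Y2" using Y1 pY2 by auto
  then have "card (Y2 \<inter> Y1) = 1" using assms(4) Y1 Y2 by blast
  then have "card (Y2 \<inter> {q,r}) = 1" using r by simp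
  then have rY2: "r \<in> Y2" using card1_pair[OF r(2)[symmetric]] Y2 by blast
  have Y2e: "Y2 = {p,r}"
  proof -
    have "{p,r} \<subseteq> Y2" using pY2 rY2 by auto
    moreover have "card {p,r} = 2" using rp by auto
    moreover have "finite Y2" "card Y2 = 2" using assms(3) Y2 card.infinite by fastforce+
    ultimately show ?thesis by (metis card_subset_eq)
  qed
  have "F \<subseteq> {X,Y1,Y2}"
  proof
    fix Z assume Z: "Z \<in> F"
    show "Z \<in> {X,Y1,Y2}"
    proof (rule ccontr)
      assume "Z \<notin> {X,Y1,Y2}"
      then have "Z \<noteq> X" "Z \<noteq> Y1" "Z \<noteq> Y2" by auto
      then have "card (Z \<inter> X) = 1" "card (Z \<inter> Y1) = 1" "card (Z \<inter> Y2) = 1"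
        using assms(4) Z X Y1 Y2 by blast+
      then have "(p \<in> Z) \<noteq> (q \<in> Z)" "(q \<in> Z) \<noteq> (r \<in> Z)" "(p \<in> Z) \<noteq> (r \<in> Z)"
        using card1_pair pq r rp Y2e by metis+
      then show False by blast
    qed
  qed
  moreover have "card {X,Y1,Y2} \<le> 3" by (simp add: card_insert_if)
  ultimately have "card F \<le> 3" by (meson card_mono finite.emptyI finite.insertI le_trans)
  then show False using assms(2) by linarith
qed




lemma in_sphere: "z \<in> perms n \<Longrightarrow> b = z \<or> adjx n z b \<Longrightarrow> b \<in> sphere_K n z 1"
proof -
  assume zp: "z \<in> perms n" and h: "b = z \<or> adjx n z b"
  have "sphere_K n z 1 = insert z ((\<lambda>i. z \<circ> sw i) ` {1..n-1})" by (rule sphere_eq[OF zp])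
  then show ?thesis using h unfolding adjx_def by auto
qed

lemma common:
  assumes "inj x" "i \<noteq> j" "x \<circ> sw l \<circ> sw r = x \<circ> sw i \<circ> sw j"
  shows "l = i \<or> l = j"
proof -
  have "x \<circ> (sw l \<circ> sw r) = x \<circ> (sw i \<circ> sw j)" using assms(3) by (simp add: o_assoc)
  then have "sw l \<circ> sw r = sw i \<circ> sw j" using comp_cancel assms(1) by blast
  then show ?thesis using T_commute_id[of i j l r] assms(2) by metis
qed

lemma finite_perms: "finite (perms n)"
  unfolding perms_def using finite_permutations[of "{1..n}"] by simp

lemma PP_m2: "inj x \<Longrightarrow> PP (x m) (x (Suc (Suc m))) = PP (x m') (x (Suc (Suc m'))) \<Longrightarrow> m = m'"
  unfolding PP_eq by (auto simp: inj_eq)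

lemma PP_adj: "inj x \<Longrightarrow> PP (x k) (x (Suc k)) = PP (x i) (x (Suc i)) \<Longrightarrow> k = i"
  unfolding PP_eq by (auto simp: inj_eq)

lemma ar1: "(N::nat) + 2*k = c + 1 \<Longrightarrow> c = 0 \<or> c = 2 \<Longrightarrow> N \<le> 2 \<Longrightarrow> N = 1" by presburger
lemma ar2: "(N::nat) + 2*k = c + c \<Longrightarrow> N \<le> 2 \<Longrightarrow> N \<noteq> 0 \<Longrightarrow> N = 2" by presburger

lemma card2: "card {x,y} \<le> 2" by (simp add: card_insert_if)
lemma card3: "card {x,y,z} \<le> 3" by (simp add: card_insert_if)

lemma main:
  assumes ac: "anticode n 2 A" and n5: "n \<ge> 5" and cA: "card A \<ge> n"
  shows "\<exists>z\<in>perms n. A \<subseteq> sphere_K n z 1"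
proof -
  have Ap: "A \<subseteq> perms n" using ac unfolding anticode_def by auto
  have fA: "finite A" using Ap finite_perms finite_subset by blast
  obtain a where aA: "a \<in> A" using cA n5 by fastforce
  have ap: "a \<in> perms n" using aA Ap by blast
  have ainj: "inj a" using perm_inj ap by blast
  define D where "D b = Dl a b" for b
  have fD: "finite (D b)" "card (D b) \<le> 2" if "b \<in> A" for b
    using ac_props[OF ac aA that] D_def by auto
  have D0: "card (D b) = 0 \<Longrightarrow> b = a" if "b \<in> A" for b
    using ac_props[OF ac aA that] D_def by auto
  have D1: "card (D b) = 1 \<Longrightarrow> adjx n a b" if "b \<in> A" for b
    using ac_props[OF ac aA that] D_def by auto
  have D2: "card (D b) = 2 \<Longrightarrow> two n a b" if "b \<in> A" for b
    using ac_props[OF ac aA that] D_def by auto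
  have P: "card (Dl b c) + 2 * card (D b \<inter> D c) = card (D b) + card (D c)" if "b \<in> A" "c \<in> A" for b c
    using card_symd[OF fD(1)[OF that(1)] fD(1)[OF that(2)]] Dl_trans[of b c a] D_def by simp
  have par_odd: "adjx n b c" if "b \<in> A" "c \<in> A" "card (D b) = 1" "card (D c) \<noteq> 1" for b c
  proof -
    have "card (D c) = 0 \<or> card (D c) = 2" using fD(2)[OF that(2)] that(4) by linarith
    moreover have "card (Dl b c) \<le> 2" using ac_props(2)[OF ac that(1,2)] .
    moreover have "card (Dl b c) + 2 * card (D b \<inter> D c) = card (D c) + 1" using P[OF that(1,2)] that(3) by simp
    ultimately have "card (Dl b c) = 1" using ar1 by blast
    then show ?thesis using ac_props(4)[OF ac that(1,2)] by blast
  qed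
  have par_even: "two n b c" if "b \<in> A" "c \<in> A" "b \<noteq> c" "card (D b) = card (D c)" for b c
  proof -
    have "card (Dl b c) \<le> 2" using ac_props(2)[OF ac that(1,2)] .
    moreover have "card (Dl b c) \<noteq> 0" using ac_props(3)[OF ac that(1,2)] that(3) by auto
    moreover have "card (Dl b c) + 2 * card (D b \<inter> D c) = card (D c) + card (D c)" using P[OF that(1,2)] that(4) by simp
    ultimately have "card (Dl b c) = 2" using ar2 by blast
    then show ?thesis using ac_props(5)[OF ac that(1,2)] by blast
  qed
  show ?thesis
  proof (cases "\<forall>b\<in>A. b \<noteq> a \<longrightarrow> card (D b) = 1")
    case True
    have "A \<subseteq> sphere_K n a 1" using True D1 in_sphere[OF ap] by blast
    then show ?thesis using ap by blast
  next
    case False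
    then obtain e where eA: "e \<in> A" "e \<noteq> a" "card (D e) \<noteq> 1" by blast
    have De2: "card (D e) = 2" using fD(2)[OF eA(1)] eA(3) D0[OF eA(1)] eA(2) by linarith
    show ?thesis
    proof (cases "\<exists>ob\<in>A. card (D ob) = 1")
      case True
      then obtain ob where obA: "ob \<in> A" "card (D ob) = 1" by blast
      have op: "ob \<in> perms n" using obA Ap by blast
      have oinj: "inj ob" using perm_inj op by blast
      show ?thesis
      proof (cases "\<forall>ob'\<in>A. card (D ob') = 1 \<longrightarrow> ob' = ob")
        case True
        have "A \<subseteq> sphere_K n ob 1"
        proof
          fix b assume bA: "b \<in> A"
          show "b \<in> sphere_K n ob 1"
          proof (cases "card (D b) = 1")
            case True then show ?thesis using \<open>\<forall>ob'\<in>A. card (D ob') = 1 \<longrightarrow> ob' = ob\<close> bA in_sphere[OF op] by blast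
          next
            case False then show ?thesis using par_odd[OF obA(1) bA obA(2)] in_sphere[OF op] by blast
          qed
        qed
        then show ?thesis using op by blast
      next
        case False
        then obtain ob2 where o2A: "ob2 \<in> A" "card (D ob2) = 1" "ob2 \<noteq> ob" by blast
        obtain i j where ij: "i \<noteq> j" "e = a \<circ> sw i \<circ> sw j" using D2[OF eA(1) De2] unfolding two_def by blast
        have Osub: "{b\<in>A. card (D b) = 1} \<subseteq> {a \<circ> sw i, a \<circ> sw j}"
        proof
          fix b assume "b \<in> {b\<in>A. card (D b) = 1}"
          then have bA: "b \<in> A" and b1: "card (D b) = 1" by auto
          obtain k where k: "b = a \<circ> sw k" using D1[OF bA b1] unfolding adjx_def by blast
          obtain l where l: "e = b \<circ> sw l" using par_odd[OF bA eA(1) b1 eA(3)] unfolding adjx_def by blast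
          have "a \<circ> sw k \<circ> sw l = a \<circ> sw i \<circ> sw j" using k l ij(2) by simp
          then have "k = i \<or> k = j" using common[OF ainj ij(1)] by blast
          then show "b \<in> {a \<circ> sw i, a \<circ> sw j}" using k by auto
        qed
        obtain k' m' where km: "k' \<noteq> m'" "ob2 = ob \<circ> sw k' \<circ> sw m'"
          using par_even[OF obA(1) o2A(1) o2A(3)[symmetric]] obA(2) o2A(2) unfolding two_def by auto
        have Esub: "{b\<in>A. card (D b) \<noteq> 1} \<subseteq> {ob \<circ> sw k', ob \<circ> sw m'}"
        proof
          fix c assume "c \<in> {b\<in>A. card (D b) \<noteq> 1}"
          then have cA: "c \<in> A" and c1: "card (D c) \<noteq> 1" by auto
          obtain l where l: "c = ob \<circ> sw l" using par_odd[OF obA(1) cA obA(2) c1] unfolding adjx_def by blast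
          obtain r where r: "c = ob2 \<circ> sw r" using par_odd[OF o2A(1) cA o2A(2) c1] unfolding adjx_def by blast
          have "ob2 = c \<circ> sw r" by (metis r sw_comp_sw)
          then have "ob \<circ> sw l \<circ> sw r = ob \<circ> sw k' \<circ> sw m'" using l km(2) by simp
          then have "l = k' \<or> l = m'" using common[OF oinj km(1)] by blast
          then show "c \<in> {ob \<circ> sw k', ob \<circ> sw m'}" using l by auto
        qed
        have "A \<subseteq> {a \<circ> sw i, a \<circ> sw j} \<union> {ob \<circ> sw k', ob \<circ> sw m'}" using Osub Esub by blast
        then have "card A \<le> card ({a \<circ> sw i, a \<circ> sw j} \<union> {ob \<circ> sw k', ob \<circ> sw m'})"
          by (rule card_mono[rotated]) simp
        also have "\<dots> \<le> card {a \<circ> sw i, a \<circ> sw j} + card {ob \<circ> sw k', ob \<circ> sw m'}" by (rule card_Un_le)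
        also have "\<dots> \<le> 2 + 2" by (intro add_mono card2)
        finally show ?thesis using cA n5 by linarith
      qed
    next
      case False
      then have all2: "card (D b) = 2" if "b \<in> A" "b \<noteq> a" for b
      proof -
        have "card (D b) \<noteq> 1" using False that by blast
        moreover have "card (D b) \<noteq> 0" using D0[OF that(1)] that(2) by blast
        ultimately show ?thesis using fD(2)[OF that(1)] by linarith
      qed
      define F where "F = D ` (A - {a})"
      have injD: "inj_on D (A - {a})"
      proof (rule inj_onI)
        fix b c assume "b \<in> A - {a}" "c \<in> A - {a}" "D b = D c"
        then have "card (Dl b c) = 0" using Dl_trans[of b c a] D_def by (simp add: symd_def)
        then show "b = c" using ac_props(3)[OF ac] \<open>b \<in> A - {a}\<close> \<open>c \<in> A - {a}\<close> by auto
      qed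
      have cF: "card F = card A - 1" unfolding F_def using card_image[OF injD] aA fA by simp
      have "\<exists>p. \<forall>X\<in>F. p \<in> X"
      proof (rule star)
        show "finite F" unfolding F_def using fA by simp
        show "4 \<le> card F" using cF cA n5 by linarith
        show "\<forall>X\<in>F. card X = 2" unfolding F_def using all2 by auto
        show "\<forall>X\<in>F. \<forall>Y\<in>F. X \<noteq> Y \<longrightarrow> card (X \<inter> Y) = 1"
        proof (intro ballI impI)
          fix X Y assume "X \<in> F" "Y \<in> F" "X \<noteq> Y"
          then obtain b c where bc: "b \<in> A" "b \<noteq> a" "c \<in> A" "c \<noteq> a" "X = D b" "Y = D c" "b \<noteq> c"
            unfolding F_def by auto
          have c2: "card (D b) = 2" "card (D c) = 2" using all2 bc by auto
          have "card (Dl b c) \<le> 2" using ac_props(2)[OF ac bc(1,3)] .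
          moreover have "card (Dl b c) \<noteq> 0" using ac_props(3)[OF ac bc(1,3)] bc(7) by auto
          moreover have "card (Dl b c) + 2 * card (D b \<inter> D c) = card (D c) + card (D c)" using P[OF bc(1,3)] c2 by simp
          ultimately have "card (Dl b c) = 2" using ar2 by blast
          then show "card (X \<inter> Y) = 1" using P[OF bc(1,3)] c2 bc by simp
        qed
      qed
      then obtain p where p: "\<forall>b\<in>A - {a}. p \<in> D b" unfolding F_def by blast
      have form: "\<exists>i j. 1 \<le> i \<and> i \<le> n-1 \<and> 1 \<le> j \<and> j \<le> n-1 \<and> i \<noteq> j \<and> b = a \<circ> sw i \<circ> sw j \<and>
           (p = PP (a i) (a (Suc i)) \<or> p = PP (a (sw i j)) (a (sw i (Suc j))))" if th: "b \<in> A" "b \<noteq> a" for b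
      proof -
        obtain i j where ij: "1 \<le> i" "i \<le> n-1" "1 \<le> j" "j \<le> n-1" "i \<noteq> j" "b = a \<circ> sw i \<circ> sw j"
          using D2[OF th(1) all2[OF th]] unfolding two_def by blast
        have "D b = symd {PP (a i) (a (Suc i))} {PP (a (sw i j)) (a (sw i (Suc j)))}"
          using Dl_two[OF perm_bij[OF ap]] ij(6) D_def by simp
        then have "p = PP (a i) (a (Suc i)) \<or> p = PP (a (sw i j)) (a (sw i (Suc j)))"
          using p th by (auto simp: symd_def)
        then show ?thesis using ij by blast
      qed
      show ?thesis
      proof (cases "\<exists>k. 1 \<le> k \<and> k \<le> n-1 \<and> p = PP (a k) (a (Suc k))")
        case True
        then obtain k where k: "1 \<le> k" "k \<le> n-1" "p = PP (a k) (a (Suc k))" by blast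
        define z where "z = a \<circ> sw k"
        have zp: "z \<in> perms n" unfolding z_def using perms_comp_sw[OF ap k(1,2)] .
        have "A \<subseteq> sphere_K n z 1"
        proof
          fix b assume bA: "b \<in> A"
          show "b \<in> sphere_K n z 1"
          proof (cases "b = a")
            case True
            have "a = z \<circ> sw k" unfolding z_def by simp
            then have "adjx n z b" using True k unfolding adjx_def by blast
            then show ?thesis using in_sphere[OF zp] by blast
          next
            case False
            obtain i j where ij: "1 \<le> i" "i \<le> n-1" "1 \<le> j" "j \<le> n-1" "i \<noteq> j" "b = a \<circ> sw i \<circ> sw j"
              "p = PP (a i) (a (Suc i)) \<or> p = PP (a (sw i j)) (a (sw i (Suc j)))"
              using form[OF bA False] by blast
            have "adjx n z b"
            proof (cases "p = PP (a i) (a (Suc i))")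
              case True
              then have "k = i" using PP_adj[OF ainj] k(3) by metis
              then show ?thesis using ij unfolding adjx_def z_def by blast
            next
              case False
              then have "PP (a k) (a (Suc k)) = PP (a (sw i j)) (a (sw i (Suc j)))" using ij(7) k(3) by simp
              then have "(sw i j = k \<and> sw i (Suc j) = Suc k) \<or> (sw i j = Suc k \<and> sw i (Suc j) = k)"
                unfolding PP_eq using ainj by (auto simp: inj_eq)
              from T3[OF ij(5) this] have jk: "j = k" "sw i \<circ> sw j = sw j \<circ> sw i" by auto
              have "b = a \<circ> (sw i \<circ> sw j)" using ij(6) by (simp add: o_assoc)
              also have "\<dots> = z \<circ> sw i" using jk unfolding z_def by (simp add: o_assoc)
              finally show ?thesis using ij unfolding adjx_def by blast
            qed
            then show ?thesis using in_sphere[OF zp] by blast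
          qed
        qed
        then show ?thesis using zp by blast
      next
        case noadj: False
        have form2: "\<exists>m. p = PP (a m) (a (Suc (Suc m))) \<and> (b = a \<circ> sw m \<circ> sw (Suc m) \<or> b = a \<circ> sw (Suc m) \<circ> sw m)"
          if th: "b \<in> A" "b \<noteq> a" for b
        proof -
          obtain i j where ij: "1 \<le> i" "i \<le> n-1" "1 \<le> j" "j \<le> n-1" "i \<noteq> j" "b = a \<circ> sw i \<circ> sw j"
            "p = PP (a i) (a (Suc i)) \<or> p = PP (a (sw i j)) (a (sw i (Suc j)))"
            using form[OF th] by blast
          have pp: "p = PP (a (sw i j)) (a (sw i (Suc j)))" using ij noadj by blast
          consider "sw i j = j \<and> sw i (Suc j) = Suc j" | "j = Suc i" | "Suc j = i" using T4[OF ij(5)] by blast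
          then show ?thesis
          proof cases
            case 1 then show ?thesis using pp noadj ij by auto
          next
            case 2
            then have "p = PP (a i) (a (Suc (Suc i)))" using pp by (simp add: sw_apply)
            then show ?thesis using ij(6) 2 by blast
          next
            case 3
            then have "p = PP (a j) (a (Suc (Suc j)))" using pp by (auto simp: sw_apply)
            then show ?thesis using ij(6) 3 by blast
          qed
        qed
        obtain b0 where b0: "b0 \<in> A" "b0 \<noteq> a" using eA by blast
        obtain m0 where m0: "p = PP (a m0) (a (Suc (Suc m0)))" using form2[OF b0] by blast
        have "A \<subseteq> {a, a \<circ> sw m0 \<circ> sw (Suc m0), a \<circ> sw (Suc m0) \<circ> sw m0}"
        proof
          fix b assume bA: "b \<in> A"
          show "b \<in> {a, a \<circ> sw m0 \<circ> sw (Suc m0), a \<circ> sw (Suc m0) \<circ> sw m0}"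
          proof (cases "b = a")
            case False
            then obtain m where m: "p = PP (a m) (a (Suc (Suc m)))"
              "b = a \<circ> sw m \<circ> sw (Suc m) \<or> b = a \<circ> sw (Suc m) \<circ> sw m" using form2[OF bA] by blast
            have "m = m0" using PP_m2[OF ainj] m(1) m0 by metis
            then show ?thesis using m(2) by auto
          qed simp
        qed
        then have "card A \<le> card {a, a \<circ> sw m0 \<circ> sw (Suc m0), a \<circ> sw (Suc m0) \<circ> sw m0}"
          by (intro card_mono) auto
        also have "\<dots> \<le> 3" by (rule card3)
        finally show ?thesis using cA n5 by linarith
      qed
    qed
  qed
qed

theorem theorem6:
  fixes n :: nat and A :: "(nat \<Rightarrow> nat) set"
  assumes "n \<ge> 5" and "optimal_anticode n 2 A"
  shows "(\<exists>\<sigma>\<in>perms n. A = sphere_K n \<sigma> 1) \<and> card A = n"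
proof -
  have ac: "anticode n 2 A" and opt: "\<And>B. anticode n 2 B \<Longrightarrow> card B \<le> card A"
    using assms(2) unfolding optimal_anticode_def by auto
  have idp: "id \<in> perms n" unfolding perms_def by (simp add: permutes_id)
  have "card (sphere_K n id 1) = n" using card_sphere[OF idp] assms(1) by simp
  then have cA: "n \<le> card A" using opt[OF sphere_anticode[OF idp]] by simp
  obtain z where zp: "z \<in> perms n" and sub: "A \<subseteq> sphere_K n z 1" using main[OF ac assms(1) cA] by blast
  have cs: "card (sphere_K n z 1) = n" using card_sphere[OF zp] assms(1) by simp
  have fs: "finite (sphere_K n z 1)" using finite_perms unfolding sphere_K_def by simp
  have "card A \<le> n" using card_mono[OF fs sub] cs by simp
  then have "card A = n" using cA by simp
  moreover have "A = sphere_K n z 1" using card_subset_eq[OF fs sub] cs \<open>card A = n\<close> by simp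
  ultimately show ?thesis using zp by blast
qed


end
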